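(* Let $(X,d^\star)$ be a $\star$-metric space and $\{x_n\}$ a Cauchy sequence in $(X,d^\star)$. If $\{x_n\}$ has an accumulation point $x_0\in X$, then $\{x_n\}$ converges to $x_0$ under $d^\star$, i.e. for every $\epsilon>0$ there is $k$ with $d^\star(x_0,x_n)<\epsilon$ for all $n\ge k$.
   Context: A $t$-definer is a function $\star:[0,\infty)\times[0,\infty)\to[0,\infty)$ such that for all $a,b,c\ge 0$: $a\star b=b\star a$; $a\star(b\star c)=(a\star b)\star c$; if $a\le b$ then $a\star c\le b\star c$; $a\star 0=a$; and $\star$ is continuous in its first variable with respect to the Euclidean topology. Given a nonempty set $X$ and a $t$-definer $\star$, a $\star$-metric on $X$ is a function $d^\star:X\times X\to[0,\infty)$ such that for all $x,y,z\in X$: $d^\star(x,y)=0$ iff $x=y$; $d^\star(x,y)=d^\star(y,x)$; and $d^\star(x,y)\le d^\star(x,z)\star d^\star(z,y)$. A sequence $\{x_n\}$ is Cauchy if for every $\epsilon>0$ there is $k\in\mathbb{N}$ with $d^\star(x_n,x_m)<\epsilon$ for all $m,n\ge k$. An accumulation point of the sequence $\{x_n\}$ is a point $x_0$ such that for every $\epsilon>0$ there are infinitely many $n$ with $d^\star(x_0,x_n)<\epsilon$ (equivalently, every neighborhood of $x_0$ in the topology induced by $d^\star$ contains $x_n$ for infinitely many $n$). *)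

theory Defs
  imports "HOL-Analysis.Analysis"
begin

text \<open>A t-definer: a binary operation on [0,\<infinity>), modelled as a real function
  that maps nonnegative arguments to nonnegative values.\<close>
definition t_definer :: "(real \<Rightarrow> real \<Rightarrow> real) \<Rightarrow> bool" where
  "t_definer star \<longleftrightarrow>
     (\<forall>a b. a \<ge> 0 \<longrightarrow> b \<ge> 0 \<longrightarrow> star a b \<ge> 0) \<and>
     (\<forall>a b. a \<ge> 0 \<longrightarrow> b \<ge> 0 \<longrightarrow> star a b = star b a) \<and>
     (\<forall>a b c. a \<ge> 0 \<longrightarrow> b \<ge> 0 \<longrightarrow> c \<ge> 0 \<longrightarrow> star a (star b c) = star (star a b) c) \<and>
     (\<forall>a b c. a \<ge> 0 \<longrightarrow> b \<ge> 0 \<longrightarrow> c \<ge> 0 \<longrightarrow> a \<le> b \<longrightarrow> star a c \<le> star b c) \<and>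
     (\<forall>a. a \<ge> 0 \<longrightarrow> star a 0 = a) \<and>
     (\<forall>b. b \<ge> 0 \<longrightarrow> continuous_on {0..} (\<lambda>a. star a b))"

definition star_metric :: "'a set \<Rightarrow> (real \<Rightarrow> real \<Rightarrow> real) \<Rightarrow> ('a \<Rightarrow> 'a \<Rightarrow> real) \<Rightarrow> bool" where
  "star_metric X star d \<longleftrightarrow>
     (\<forall>x\<in>X. \<forall>y\<in>X. d x y \<ge> 0) \<and>
     (\<forall>x\<in>X. \<forall>y\<in>X. d x y = 0 \<longleftrightarrow> x = y) \<and>
     (\<forall>x\<in>X. \<forall>y\<in>X. d x y = d y x) \<and>
     (\<forall>x\<in>X. \<forall>y\<in>X. \<forall>z\<in>X. d x y \<le> star (d x z) (d z y))"

definition star_cauchy :: "('a \<Rightarrow> 'a \<Rightarrow> real) \<Rightarrow> (nat \<Rightarrow> 'a) \<Rightarrow> bool" where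
  "star_cauchy d x \<longleftrightarrow> (\<forall>\<epsilon>>0. \<exists>k. \<forall>m\<ge>k. \<forall>n\<ge>k. d (x n) (x m) < \<epsilon>)"

definition star_accumulation_point :: "('a \<Rightarrow> 'a \<Rightarrow> real) \<Rightarrow> (nat \<Rightarrow> 'a) \<Rightarrow> 'a \<Rightarrow> bool" where
  "star_accumulation_point d x x0 \<longleftrightarrow> (\<forall>\<epsilon>>0. infinite {n. d x0 (x n) < \<epsilon>})"

end

theory Submission
  imports Defs
begin

theorem proposition4p4:
  fixes X :: "'a set" and star :: "real \<Rightarrow> real \<Rightarrow> real" and d :: "'a \<Rightarrow> 'a \<Rightarrow> real"
    and x :: "nat \<Rightarrow> 'a" and x0 :: 'a
  assumes "X \<noteq> {}"
    and "t_definer star"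
    and "star_metric X star d"
    and "\<forall>n. x n \<in> X"
    and "star_cauchy d x"
    and "x0 \<in> X"
    and "star_accumulation_point d x x0"
  shows "\<forall>\<epsilon>>0. \<exists>k. \<forall>n\<ge>k. d x0 (x n) < \<epsilon>"
proof (intro allI impI)
  fix e :: real assume e: "e > 0"
  have T: "\<forall>a b. a \<ge> 0 \<longrightarrow> b \<ge> 0 \<longrightarrow> star a b = star b a"
    "\<forall>a b c. a \<ge> 0 \<longrightarrow> b \<ge> 0 \<longrightarrow> c \<ge> 0 \<longrightarrow> a \<le> b \<longrightarrow> star a c \<le> star b c"
    "\<forall>a. a \<ge> 0 \<longrightarrow> star a 0 = a"
    "\<forall>b. b \<ge> 0 \<longrightarrow> continuous_on {0..} (\<lambda>a. star a b)"
    using assms(2) unfolding t_definer_def by auto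
  have M: "\<forall>x\<in>X. \<forall>y\<in>X. d x y \<ge> 0"
    "\<forall>x\<in>X. \<forall>y\<in>X. \<forall>z\<in>X. d x y \<le> star (d x z) (d z y)"
    using assms(3) unfolding star_metric_def by auto
  have h0: "star 0 (e/2) = e/2" using T(1,3) e by auto
  have "continuous_on {0..} (\<lambda>a. star a (e/2))" using T(4) e by auto
  then obtain del where del: "del > 0"
    "\<forall>a\<in>{0..}. dist a 0 < del \<longrightarrow> dist (star a (e/2)) (star 0 (e/2)) < e/2"
    unfolding continuous_on_iff using e by (metis atLeast_iff half_gt_zero order_refl)
  have D: "star a (e/2) < e" if "a \<ge> 0" "a < del" for a
  proof -
    have "\<bar>star a (e/2) - e/2\<bar> < e/2" using del(2) that h0 by (auto simp: dist_real_def)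
    then show ?thesis by linarith
  qed
  obtain k where k: "\<forall>m\<ge>k. \<forall>n\<ge>k. d (x n) (x m) < e/2"
    using assms(5) e unfolding star_cauchy_def by (meson half_gt_zero)
  have "infinite {n. d x0 (x n) < del}"
    using assms(7) del(1) unfolding star_accumulation_point_def by auto
  then obtain m where m: "m \<ge> k" "d x0 (x m) < del"
    by (metis (mono_tags, lifting) finite_nat_set_iff_bounded_le mem_Collect_eq not_le nless_le)
  show "\<exists>k. \<forall>n\<ge>k. d x0 (x n) < e"
  proof (intro exI allI impI)
    fix n assume n: "n \<ge> k"
    have a0: "d x0 (x m) \<ge> 0" and b0: "d (x m) (x n) \<ge> 0"
      using M(1) assms(4,6) by auto
    have b: "d (x m) (x n) \<le> e/2" using k m n by (metis less_imp_le)
    have "d x0 (x n) \<le> star (d x0 (x m)) (d (x m) (x n))"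
      using M(2) assms(4,6) by auto
    also have "\<dots> = star (d (x m) (x n)) (d x0 (x m))" using T(1) a0 b0 by auto
    also have "\<dots> \<le> star (e/2) (d x0 (x m))" using T(2) a0 b0 b e by auto
    also have "\<dots> = star (d x0 (x m)) (e/2)" using T(1) a0 e by auto
    also have "\<dots> < e" using D a0 m(2) by auto
    finally show "d x0 (x n) < e" .
  qed
qed

end
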